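(* Let $\Omega=\{\Sigma_1,\dots,\Sigma_n\}$ be a distribution of a finite alphabet $\Sigma$ and let $\mathcal L\subseteq\Sigma^\star$ be a product language over $\Omega$. Fix $i$, write $\Gamma=\bigcup_{j\ne i}\Sigma_j$, and for each $j\neq i$ let $O_j\subseteq\mathcal L|_{\Sigma_j}$. Let $\sigma\in\Sigma_i^\star$ and $\sigma'\in\|_{j\neq i}(O_j,\Sigma_j)$ satisfy $\sigma'|_{\Sigma_i}=\sigma|_{\Gamma}$, and let $\sigma_{int}\in(\{\sigma\},\Sigma_i)\,\|\,(\{\sigma'\},\Gamma)$. Then $\sigma\in\mathcal L|_{\Sigma_i}$ if and only if $\sigma_{int}\in\mathcal L$.
   Context: $\sigma|_{\Sigma'}$ denotes the projection of a word onto $\Sigma'$ (the subsequence of symbols lying in $\Sigma'$), lifted elementwise to sets. For languages $\mathcal L_k\subseteq A_k^\star$, $\|_{k}(\mathcal L_k,A_k)=\{w\in(\bigcup_kA_k)^\star\mid\forall k.\ w|_{A_k}\in\mathcal L_k\}$. A distribution of $\Sigma$ is a finite set $\Omega=\{\Sigma_1,\dots,\Sigma_n\}$ of subsets with union $\Sigma$. $\mathcal L\subseteq\Sigma^\star$ is a product language over $\Omega$ if $\mathcal L=\|_{i=1}^n(\mathcal L_i,\Sigma_i)$ for some $\mathcal L_i\subseteq\Sigma_i^\star$. *)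

theory Defs
  imports Main
begin

definition proj :: "'a list \<Rightarrow> 'a set \<Rightarrow> 'a list" where
  "proj w S = filter (\<lambda>a. a \<in> S) w"

definition projL :: "'a list set \<Rightarrow> 'a set \<Rightarrow> 'a list set" where
  "projL L S = (\<lambda>w. proj w S) ` L"

definition par :: "'i set \<Rightarrow> ('i \<Rightarrow> 'a list set) \<Rightarrow> ('i \<Rightarrow> 'a set) \<Rightarrow> 'a list set" where
  "par I L A = {w. w \<in> lists (\<Union>k\<in>I. A k) \<and> (\<forall>k\<in>I. proj w (A k) \<in> L k)}"

definition par2 :: "'a list set \<Rightarrow> 'a set \<Rightarrow> 'a list set \<Rightarrow> 'a set \<Rightarrow> 'a list set" where
  "par2 L1 A1 L2 A2 = par UNIV (\<lambda>b. if b then L1 else L2) (\<lambda>b. if b then A1 else A2)"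

definition distribution :: "'a set \<Rightarrow> nat \<Rightarrow> (nat \<Rightarrow> 'a set) \<Rightarrow> bool" where
  "distribution Alph n Sig \<longleftrightarrow> (\<Union>k\<in>{1..n}. Sig k) = Alph"

definition product_language :: "nat \<Rightarrow> (nat \<Rightarrow> 'a set) \<Rightarrow> 'a list set \<Rightarrow> bool" where
  "product_language n Sig L \<longleftrightarrow>
     (\<exists>Lk. (\<forall>k\<in>{1..n}. Lk k \<subseteq> lists (Sig k)) \<and> L = par {1..n} Lk Sig)"

end

theory Submission
  imports Defs
begin

lemma proj_proj_sub: "B \<subseteq> A \<Longrightarrow> proj (proj w A) B = proj w B"
  unfolding proj_def by (induction w) auto

theorem mainTheorem4:
  fixes Alph :: "'a set" and n :: nat and Sig :: "nat \<Rightarrow> 'a set"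
    and L :: "'a list set" and i :: nat and Obs :: "nat \<Rightarrow> 'a list set"
    and \<sigma> \<sigma>' \<sigma>_int :: "'a list"
  assumes "finite Alph"
    and "distribution Alph n Sig"
    and "product_language n Sig L"
    and "i \<in> {1..n}"
    and "\<forall>j\<in>{1..n} - {i}. Obs j \<subseteq> projL L (Sig j)"
    and "\<sigma> \<in> lists (Sig i)"
    and "\<sigma>' \<in> par ({1..n} - {i}) Obs Sig"
    and "proj \<sigma>' (Sig i) = proj \<sigma> (\<Union>j\<in>{1..n} - {i}. Sig j)"
    and "\<sigma>_int \<in> par2 {\<sigma>} (Sig i) {\<sigma>'} (\<Union>j\<in>{1..n} - {i}. Sig j)"
  shows "\<sigma> \<in> projL L (Sig i) \<longleftrightarrow> \<sigma>_int \<in> L"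
proof -
  define G where "G = (\<Union>j\<in>{1..n} - {i}. Sig j)"
  obtain Lk where Lk: "L = par {1..n} Lk Sig" using assms(3) unfolding product_language_def by blast
  have P9: "\<sigma>_int \<in> lists (Sig i \<union> G)" "proj \<sigma>_int (Sig i) = \<sigma>" "proj \<sigma>_int G = \<sigma>'"
    using assms(9) unfolding par2_def par_def G_def
    by (auto simp: UNIV_bool)
  have P7: "\<And>j. j \<in> {1..n} - {i} \<Longrightarrow> proj \<sigma>' (Sig j) \<in> Obs j"
    using assms(7) unfolding par_def by auto
  have inL: "\<And>w k. w \<in> L \<Longrightarrow> k \<in> {1..n} \<Longrightarrow> proj w (Sig k) \<in> Lk k"
    using Lk unfolding par_def by auto
  have un: "Sig i \<union> G = (\<Union>k\<in>{1..n}. Sig k)" using assms(4) unfolding G_def by auto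
  show ?thesis
  proof
    assume "\<sigma> \<in> projL L (Sig i)"
    then obtain w where w: "w \<in> L" "\<sigma> = proj w (Sig i)" unfolding projL_def by auto
    have "\<forall>k\<in>{1..n}. proj \<sigma>_int (Sig k) \<in> Lk k"
    proof
      fix k assume k: "k \<in> {1..n}"
      show "proj \<sigma>_int (Sig k) \<in> Lk k"
      proof (cases "k = i")
        case True thus ?thesis using P9 w inL k by auto
      next
        case False
        hence kk: "k \<in> {1..n} - {i}" using k by auto
        have sub: "Sig k \<subseteq> G" using kk unfolding G_def by auto
        have "proj \<sigma>_int (Sig k) = proj \<sigma>' (Sig k)"
          using proj_proj_sub[OF sub, of \<sigma>_int] P9 by simp
        moreover have "proj \<sigma>' (Sig k) \<in> projL L (Sig k)" using P7[OF kk] assms(5) kk by auto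
        then obtain w' where "w' \<in> L" "proj \<sigma>' (Sig k) = proj w' (Sig k)" unfolding projL_def by auto
        ultimately show ?thesis using inL k by auto
      qed
    qed
    thus "\<sigma>_int \<in> L" using P9(1) un Lk unfolding par_def by auto
  next
    assume "\<sigma>_int \<in> L"
    thus "\<sigma> \<in> projL L (Sig i)" using P9(2) unfolding projL_def by auto
  qed
qed

end
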